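(* In the setting of the noncommutative space $\mathbb{R}^4_\theta$ described in the context, the element $g=\sum_{i,j=1}^4g_{ij}\,\mathrm{d}z^i\otimes_A\mathrm{d}z^j\in\Omega^1_A\otimes_A\Omega^1_A$ defines a (generalized) metric on $\Omega^1_A$ (i.e. it is central and determines an $A$-bimodule map $g:A\to\Omega^1_A\otimes_A\Omega^1_A$, $a\mapsto a\,g$), whose inverse metric is the map $g^{-1}:\Omega^1_A\otimes_A\Omega^1_A\to A$ determined by $g^{-1}(\mathrm{d}z^i\otimes_A\mathrm{d}z^j)=g^{ij}$.
   Context: Let $\theta\in\mathbb{R}$ and $R=(R^{ab})$ the $4\times4$ matrix (row $a$, column $b$) with rows $(1,e^{-i\theta},1,e^{i\theta})$, $(e^{i\theta},1,e^{-i\theta},1)$, $(1,e^{i\theta},1,e^{-i\theta})$, $(e^{-i\theta},1,e^{i\theta},1)$. Let $A=\mathbb{C}\langle z^1,z^2,z^3,z^4\rangle/(z^iz^j-R^{ji}z^jz^i)$. Let $\Omega^1_A=\bigoplus_{i=1}^4A\,\mathrm{d}z^i$ be the free left $A$-module with right $A$-action determined by $\mathrm{d}z^i\,z^j=R^{ji}z^j\,\mathrm{d}z^i$, and $\mathrm{d}:A\to\Omega^1_A$ the map with $z^i\mapsto\mathrm{d}z^i$ extended by the Leibniz rule. Let $P$ be the $4\times4$ matrix with rows $(0,0,1,0),(0,0,0,1),(1,0,0,0),(0,1,0,0)$, $(g_{ij})=\tfrac12P$ and $(g^{ij})=2P$; $g^{-1}$ is extended left $A$-linearly using the left basis $\{\mathrm{d}z^i\otimes_A\mathrm{d}z^j\}$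 of $\Omega^1_A\otimes_A\Omega^1_A$. A (generalized) metric is an $A$-bimodule map $g:A\to\Omega^1_A\otimes_A\Omega^1_A$, $g(1)=\sum_\alpha g^\alpha\otimes_Ag_\alpha$, for which there is an $A$-bimodule map $g^{-1}:\Omega^1_A\otimes_A\Omega^1_A\to A$ with $\sum_\alpha g^{-1}(\omega\otimes_Ag^\alpha)g_\alpha=\omega=\sum_\alpha g^\alpha g^{-1}(g_\alpha\otimes_A\omega)$ for all $\omega\in\Omega^1_A$. *)

theory Defs
  imports Complex_Main "HOL-Library.Function_Algebras"
begin

text \<open>Elements of the free algebra are coefficient functions on words (lists of
letters); the letter i stands for the generator z^i.  Addition is pointwise
(Function_Algebras); multiplication is concatenation-convolution.\<close>

type_synonym fa = "nat list \<Rightarrow> complex"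

definition fa_carrier :: "fa set" where
  "fa_carrier = {a. finite {w. a w \<noteq> 0} \<and> (\<forall>w. a w \<noteq> 0 \<longrightarrow> set w \<subseteq> {1..4})}"

definition fa_mult :: "fa \<Rightarrow> fa \<Rightarrow> fa" (infixl "\<star>" 70) where
  "a \<star> b = (\<lambda>w. \<Sum>k\<le>length w. a (take k w) * b (drop k w))"

definition fa_scal :: "complex \<Rightarrow> fa \<Rightarrow> fa" where
  "fa_scal c a = (\<lambda>w. c * a w)"

definition fa_const :: "complex \<Rightarrow> fa" where
  "fa_const c = (\<lambda>w. if w = [] then c else 0)"

definition fa_gen :: "nat \<Rightarrow> fa" where
  "fa_gen i = (\<lambda>w. if w = [i] then 1 else 0)"

definition Rmat :: "real \<Rightarrow> nat \<Rightarrow> nat \<Rightarrow> complex" where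
  "Rmat \<theta> a b = (if a \<in> {1..4} \<and> b \<in> {1..4} then
     [[1, cis (-\<theta>), 1, cis \<theta>],
      [cis \<theta>, 1, cis (-\<theta>), 1],
      [1, cis \<theta>, 1, cis (-\<theta>)],
      [cis (-\<theta>), 1, cis \<theta>, 1]] ! (a - 1) ! (b - 1) else 0)"

definition rel :: "real \<Rightarrow> nat \<Rightarrow> nat \<Rightarrow> fa" where
  "rel \<theta> i j = fa_gen i \<star> fa_gen j - fa_scal (Rmat \<theta> j i) (fa_gen j \<star> fa_gen i)"

inductive_set fa_ideal :: "real \<Rightarrow> fa set" for \<theta> :: real where
  zero: "0 \<in> fa_ideal \<theta>"
| gen: "\<lbrakk>i \<in> {1..4}; j \<in> {1..4}; u \<in> fa_carrier; v \<in> fa_carrier\<rbrakk>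
          \<Longrightarrow> u \<star> rel \<theta> i j \<star> v \<in> fa_ideal \<theta>"
| add: "\<lbrakk>x \<in> fa_ideal \<theta>; y \<in> fa_ideal \<theta>\<rbrakk> \<Longrightarrow> x + y \<in> fa_ideal \<theta>"

definition A_eq :: "real \<Rightarrow> fa \<Rightarrow> fa \<Rightarrow> bool" where
  "A_eq \<theta> a b \<longleftrightarrow> a - b \<in> fa_ideal \<theta>"

text \<open>The automorphism sigma_i with dz^i a = sigma_i(a) dz^i, determined by
dz^i z^j = R^{ji} z^j dz^i.\<close>
definition sigma :: "real \<Rightarrow> nat \<Rightarrow> fa \<Rightarrow> fa" where
  "sigma \<theta> i a = (\<lambda>w. prod_list (map (\<lambda>l. Rmat \<theta> l i) w) * a w)"

text \<open>Omega^1_A: free left A-module with basis dz^1..dz^4; an element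
sum_k w_k dz^k is represented by its coefficient function k \<mapsto> w_k.\<close>
type_synonym om = "nat \<Rightarrow> fa"

definition om_carrier :: "om set" where
  "om_carrier = {\<omega>. \<forall>k. (k \<in> {1..4} \<longrightarrow> \<omega> k \<in> fa_carrier) \<and> (k \<notin> {1..4} \<longrightarrow> \<omega> k = 0)}"

definition om_eq :: "real \<Rightarrow> om \<Rightarrow> om \<Rightarrow> bool" where
  "om_eq \<theta> \<omega> \<eta> \<longleftrightarrow> (\<forall>k\<in>{1..4}. A_eq \<theta> (\<omega> k) (\<eta> k))"

definition om_lact :: "fa \<Rightarrow> om \<Rightarrow> om" where
  "om_lact a \<omega> = (\<lambda>k. a \<star> \<omega> k)"

definition om_ract :: "real \<Rightarrow> om \<Rightarrow> fa \<Rightarrow> om" where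
  "om_ract \<theta> \<omega> a = (\<lambda>k. \<omega> k \<star> sigma \<theta> k a)"

definition dz :: "nat \<Rightarrow> om" where
  "dz j = (\<lambda>k. if k = j then fa_const 1 else 0)"

text \<open>Omega^1_A \<otimes>_A Omega^1_A: free left A-module with basis dz^k \<otimes> dz^l,
represented by coefficient functions (k,l) \<mapsto> X_kl.\<close>
type_synonym tt = "nat \<Rightarrow> nat \<Rightarrow> fa"

definition tt_carrier :: "tt set" where
  "tt_carrier = {X. \<forall>k l. (k \<in> {1..4} \<and> l \<in> {1..4} \<longrightarrow> X k l \<in> fa_carrier)
                      \<and> (\<not> (k \<in> {1..4} \<and> l \<in> {1..4}) \<longrightarrow> X k l = 0)}"

definition tt_eq :: "real \<Rightarrow> tt \<Rightarrow> tt \<Rightarrow> bool" where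
  "tt_eq \<theta> X Y \<longleftrightarrow> (\<forall>k\<in>{1..4}. \<forall>l\<in>{1..4}. A_eq \<theta> (X k l) (Y k l))"

definition tt_lact :: "fa \<Rightarrow> tt \<Rightarrow> tt" where
  "tt_lact a X = (\<lambda>k l. a \<star> X k l)"

definition tt_ract :: "real \<Rightarrow> tt \<Rightarrow> fa \<Rightarrow> tt" where
  "tt_ract \<theta> X a = (\<lambda>k l. X k l \<star> sigma \<theta> k (sigma \<theta> l a))"

text \<open>omega \<otimes>_A eta = sum_{k,l} omega_k dz^k eta_l \<otimes> dz^l
  = sum_{k,l} omega_k sigma_k(eta_l) dz^k \<otimes> dz^l.\<close>
definition tens :: "real \<Rightarrow> om \<Rightarrow> om \<Rightarrow> tt" where
  "tens \<theta> \<omega> \<eta> = (\<lambda>k l. \<omega> k \<star> sigma \<theta> k (\<eta> l))"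

definition bimod_map_A_tt :: "real \<Rightarrow> (fa \<Rightarrow> tt) \<Rightarrow> bool" where
  "bimod_map_A_tt \<theta> f \<longleftrightarrow>
     (\<forall>a\<in>fa_carrier. f a \<in> tt_carrier)
   \<and> (\<forall>a\<in>fa_carrier. \<forall>b\<in>fa_carrier. A_eq \<theta> a b \<longrightarrow> tt_eq \<theta> (f a) (f b))
   \<and> (\<forall>a\<in>fa_carrier. \<forall>b\<in>fa_carrier. tt_eq \<theta> (f (a + b)) (f a + f b))
   \<and> (\<forall>c. \<forall>a\<in>fa_carrier. tt_eq \<theta> (f (fa_scal c a)) (\<lambda>k l. fa_scal c (f a k l)))
   \<and> (\<forall>a\<in>fa_carrier. \<forall>b\<in>fa_carrier. tt_eq \<theta> (f (a \<star> b)) (tt_lact a (f b)))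
   \<and> (\<forall>a\<in>fa_carrier. \<forall>b\<in>fa_carrier. tt_eq \<theta> (f (a \<star> b)) (tt_ract \<theta> (f a) b))"

definition bimod_map_tt_A :: "real \<Rightarrow> (tt \<Rightarrow> fa) \<Rightarrow> bool" where
  "bimod_map_tt_A \<theta> h \<longleftrightarrow>
     (\<forall>X\<in>tt_carrier. h X \<in> fa_carrier)
   \<and> (\<forall>X\<in>tt_carrier. \<forall>Y\<in>tt_carrier. tt_eq \<theta> X Y \<longrightarrow> A_eq \<theta> (h X) (h Y))
   \<and> (\<forall>X\<in>tt_carrier. \<forall>Y\<in>tt_carrier. A_eq \<theta> (h (X + Y)) (h X + h Y))
   \<and> (\<forall>c. \<forall>X\<in>tt_carrier. A_eq \<theta> (h (\<lambda>k l. fa_scal c (X k l))) (fa_scal c (h X)))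
   \<and> (\<forall>a\<in>fa_carrier. \<forall>X\<in>tt_carrier. A_eq \<theta> (h (tt_lact a X)) (a \<star> h X))
   \<and> (\<forall>a\<in>fa_carrier. \<forall>X\<in>tt_carrier. A_eq \<theta> (h (tt_ract \<theta> X a)) (h X \<star> a))"

definition Pmat :: "nat \<Rightarrow> nat \<Rightarrow> complex" where
  "Pmat i j = (if (i, j) \<in> {(1,3), (2,4), (3,1), (4,2)} then 1 else 0)"

definition g_low :: "nat \<Rightarrow> nat \<Rightarrow> complex" where
  "g_low i j = Pmat i j / 2"

definition g_up :: "nat \<Rightarrow> nat \<Rightarrow> complex" where
  "g_up i j = 2 * Pmat i j"

definition gmet :: tt where
  "gmet = (\<lambda>i j. if i \<in> {1..4} \<and> j \<in> {1..4} then fa_const (g_low i j) else 0)"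

text \<open>g^{-1} extended left A-linearly from g^{-1}(dz^i \<otimes> dz^j) = g^{ij}.\<close>
definition ginv :: "tt \<Rightarrow> fa" where
  "ginv X = (\<Sum>i\<in>{1..4}. \<Sum>j\<in>{1..4}. X i j \<star> fa_const (g_up i j))"

text \<open>Decomposition g(1) = sum_alpha g^alpha \<otimes> g_alpha with alpha = (i,j),
g^alpha = g_ij dz^i and g_alpha = dz^j.\<close>
definition gsup :: "nat \<times> nat \<Rightarrow> om" where
  "gsup \<alpha> = om_lact (fa_const (g_low (fst \<alpha>) (snd \<alpha>))) (dz (fst \<alpha>))"

definition gsub :: "nat \<times> nat \<Rightarrow> om" where
  "gsub \<alpha> = dz (snd \<alpha>)"

end

theory Submission
  imports Defs
begin

lemma sum_app: "(\<Sum>i\<in>I. f i) x = (\<Sum>i\<in>I. f i x)"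
  by (induct I rule: infinite_finite_induct) auto

lemma four: "{1..4::nat} = {1,2,3,4}" by auto

lemma mult_const_r: "a \<star> fa_const c = fa_scal c a"
proof (rule ext)
  fix w
  have "(\<Sum>k\<le>length w. a (take k w) * fa_const c (drop k w))
      = (\<Sum>k\<in>{..length w}. if k = length w then a w * c else 0)"
    by (rule sum.cong) (auto simp: fa_const_def)
  then show "(a \<star> fa_const c) w = fa_scal c a w"
    by (simp add: fa_mult_def fa_scal_def)
qed

lemma mult_const_l: "fa_const c \<star> a = fa_scal c a"
proof (rule ext)
  fix w
  have "(\<Sum>k\<le>length w. fa_const c (take k w) * a (drop k w))
      = (\<Sum>k\<in>{..length w}. if k = 0 then c * a w else 0)"
    by (rule sum.cong) (auto simp: fa_const_def)
  then show "(fa_const c \<star> a) w = fa_scal c a w"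
    by (simp add: fa_mult_def fa_scal_def)
qed

lemma fa_const0: "fa_const 0 = 0" by (auto simp: fa_const_def)
lemma scal0[simp]: "fa_scal 0 a = 0" by (auto simp: fa_scal_def)
lemma scal_zero[simp]: "fa_scal c 0 = 0" by (auto simp: fa_scal_def)
lemma mult0l[simp]: "0 \<star> a = 0" by (auto simp: fa_mult_def)
lemma mult0r[simp]: "a \<star> 0 = 0" by (auto simp: fa_mult_def)
lemma mult_add_l: "(a + b) \<star> c = a \<star> c + b \<star> c"
  by (auto simp: fa_mult_def algebra_simps sum.distrib)
lemma mult_add_r: "c \<star> (a + b) = c \<star> a + c \<star> b"
  by (auto simp: fa_mult_def algebra_simps sum.distrib)
lemma mult_scal_l: "fa_scal c a \<star> b = fa_scal c (a \<star> b)"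
  by (auto simp: fa_mult_def fa_scal_def sum_distrib_left algebra_simps)
lemma mult_scal_r: "a \<star> fa_scal c b = fa_scal c (a \<star> b)"
  by (auto simp: fa_mult_def fa_scal_def sum_distrib_left algebra_simps)
lemma scal_add: "fa_scal c (a + b) = fa_scal c a + fa_scal c b"
  by (auto simp: fa_scal_def algebra_simps)
lemma scal_diff: "fa_scal c (a - b) = fa_scal c a - fa_scal c b"
  by (auto simp: fa_scal_def algebra_simps)
lemma scal_scal: "fa_scal c (fa_scal d a) = fa_scal (c*d) a"
  by (auto simp: fa_scal_def)
lemma scal_sum: "fa_scal c (\<Sum>i\<in>I. f i) = (\<Sum>i\<in>I. fa_scal c (f i))"
  by (induct I rule: infinite_finite_induct) (simp_all only: sum.infinite sum.empty sum.insert not_False_eq_True scal_add scal_zero)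
lemma mult_sum_l: "(\<Sum>i\<in>I. f i) \<star> b = (\<Sum>i\<in>I. f i \<star> b)"
  by (induct I rule: infinite_finite_induct) (simp_all only: sum.infinite sum.empty sum.insert not_False_eq_True mult_add_l mult0l)
lemma mult_sum_r: "b \<star> (\<Sum>i\<in>I. f i) = (\<Sum>i\<in>I. b \<star> f i)"
  by (induct I rule: infinite_finite_induct) (simp_all only: sum.infinite sum.empty sum.insert not_False_eq_True mult_add_r mult0r)
lemma scal_apply: "fa_scal c a w = c * a w" by (simp add: fa_scal_def)

lemma sigma_const: "sigma \<theta> k (fa_const c) = fa_const c"
  by (auto simp: sigma_def fa_const_def)
lemma sigma_zero[simp]: "sigma \<theta> k 0 = 0" by (auto simp: sigma_def)
lemma sigma_add: "sigma \<theta> k (a + b) = sigma \<theta> k a + sigma \<theta> k b"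
  by (auto simp: sigma_def algebra_simps)
lemma sigma_scal: "sigma \<theta> k (fa_scal c a) = fa_scal c (sigma \<theta> k a)"
  by (auto simp: sigma_def fa_scal_def algebra_simps)
lemma sigma_sum: "sigma \<theta> k (\<Sum>i\<in>I. f i) = (\<Sum>i\<in>I. sigma \<theta> k (f i))"
  by (induct I rule: infinite_finite_induct) (simp_all only: sum.infinite sum.empty sum.insert not_False_eq_True sigma_add sigma_zero)

lemma R_pair: "m \<in> {1..4} \<Longrightarrow> Pmat k l \<noteq> 0 \<Longrightarrow> Rmat \<theta> m k * Rmat \<theta> m l = 1"
proof -
  assume m: "m \<in> {1..4}" and P: "Pmat k l \<noteq> 0"
  have kl: "(k = 1 \<and> l = 3) \<or> (k = 2 \<and> l = 4) \<or> (k = 3 \<and> l = 1) \<or> (k = 4 \<and> l = 2)"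
    using P unfolding Pmat_def by (auto split: if_splits)
  have "m = 1 \<or> m = 2 \<or> m = 3 \<or> m = 4" using m by auto
  with kl show ?thesis
    by (elim disjE conjE) (simp_all add: Rmat_def cis_mult)
qed

lemma prod_pair: "set w \<subseteq> {1..4} \<Longrightarrow> Pmat k l \<noteq> 0 \<Longrightarrow>
   prod_list (map (\<lambda>m. Rmat \<theta> m k) w) * prod_list (map (\<lambda>m. Rmat \<theta> m l) w) = 1"
proof (induct w)
  case Nil then show ?case by simp
next
  case (Cons m w)
  have "Rmat \<theta> m k * Rmat \<theta> m l = 1" using Cons by (intro R_pair) auto
  with Cons show ?case by (simp add: algebra_simps)
qed

lemma sigma_sigma: "a \<in> fa_carrier \<Longrightarrow> Pmat k l \<noteq> 0 \<Longrightarrow> sigma \<theta> k (sigma \<theta> l a) = a"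
proof (rule ext)
  fix w assume a: "a \<in> fa_carrier" and P: "Pmat k l \<noteq> 0"
  show "sigma \<theta> k (sigma \<theta> l a) w = a w"
  proof (cases "a w = 0")
    case True then show ?thesis by (simp add: sigma_def)
  next
    case False
    then have "set w \<subseteq> {1..4}" using a by (auto simp: fa_carrier_def)
    from prod_pair[OF this P, of \<theta>] show ?thesis
      by (simp add: sigma_def mult.assoc[symmetric])
  qed
qed

lemma gl0: "g_low k l \<noteq> 0 \<Longrightarrow> Pmat k l \<noteq> 0" by (simp add: g_low_def)
lemma gu0: "g_up k l \<noteq> 0 \<Longrightarrow> Pmat k l \<noteq> 0" by (simp add: g_up_def)


lemma scal_one[simp]: "fa_scal 1 a = a" by (simp add: fa_scal_def)
lemma scal_const: "fa_scal c (fa_const d) = fa_const (c*d)" by (auto simp: fa_scal_def fa_const_def)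

lemma carrier_scal: "a \<in> fa_carrier \<Longrightarrow> fa_scal c a \<in> fa_carrier"
  unfolding fa_carrier_def fa_scal_def
  by (auto elim: rev_finite_subset)
lemma carrier_zero: "0 \<in> fa_carrier" by (simp add: fa_carrier_def)
lemma carrier_const: "fa_const c \<in> fa_carrier"
proof -
  have "{w. fa_const c w \<noteq> 0} \<subseteq> {[]}" by (auto simp: fa_const_def)
  then show ?thesis unfolding fa_carrier_def by (auto simp: fa_const_def finite_subset)
qed
lemma carrier_add: "a \<in> fa_carrier \<Longrightarrow> b \<in> fa_carrier \<Longrightarrow> a + b \<in> fa_carrier"
proof -
  assume a: "a \<in> fa_carrier" and b: "b \<in> fa_carrier"
  have "{w. (a + b) w \<noteq> 0} \<subseteq> {w. a w \<noteq> 0} \<union> {w. b w \<noteq> 0}" by auto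
  moreover have "finite ({w. a w \<noteq> 0} \<union> {w. b w \<noteq> 0})" using a b by (simp add: fa_carrier_def)
  ultimately have "finite {w. (a + b) w \<noteq> 0}" by (rule finite_subset)
  moreover have "\<forall>w. (a+b) w \<noteq> 0 \<longrightarrow> set w \<subseteq> {1..4}"
  proof (intro allI impI)
    fix w assume "(a+b) w \<noteq> 0"
    then have "a w \<noteq> 0 \<or> b w \<noteq> 0" by auto
    then show "set w \<subseteq> {1..4}" using a b by (auto simp: fa_carrier_def)
  qed
  ultimately show ?thesis by (simp add: fa_carrier_def)
qed
lemma carrier_sum: "(\<And>i. i \<in> I \<Longrightarrow> f i \<in> fa_carrier) \<Longrightarrow> (\<Sum>i\<in>I. f i) \<in> fa_carrier"
  by (induct I rule: infinite_finite_induct) (auto simp: carrier_zero carrier_add)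

lemma ideal_scal: "x \<in> fa_ideal \<theta> \<Longrightarrow> fa_scal c x \<in> fa_ideal \<theta>"
proof (induct rule: fa_ideal.induct)
  case zero then show ?case by (simp only: scal_zero fa_ideal.zero)
next
  case (gen i j u v)
  have "fa_scal c (u \<star> rel \<theta> i j \<star> v) = fa_scal c u \<star> rel \<theta> i j \<star> v"
    by (simp add: mult_scal_l)
  with gen show ?case by (simp add: fa_ideal.gen carrier_scal)
next
  case (add x y) then show ?case by (metis scal_add fa_ideal.add)
qed
lemma ideal_sum: "(\<And>i. i \<in> I \<Longrightarrow> f i \<in> fa_ideal \<theta>) \<Longrightarrow> (\<Sum>i\<in>I. f i) \<in> fa_ideal \<theta>"
  by (induct I rule: infinite_finite_induct) (auto simp: fa_ideal.zero fa_ideal.add)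
lemma A_eq_refl: "A_eq \<theta> a a" by (simp add: A_eq_def fa_ideal.zero)
lemma A_eqI: "a = b \<Longrightarrow> A_eq \<theta> a b" by (simp add: A_eq_refl)
lemma tt_eqI: "(\<And>k l. k \<in> {1..4} \<Longrightarrow> l \<in> {1..4} \<Longrightarrow> X k l = Y k l) \<Longrightarrow> tt_eq \<theta> X Y"
  by (simp add: tt_eq_def A_eq_refl)
lemma om_eqI: "(\<And>k. k \<in> {1..4} \<Longrightarrow> X k = Y k) \<Longrightarrow> om_eq \<theta> X Y"
  by (simp add: om_eq_def A_eq_refl)

lemma lact_gmet: "tt_lact a gmet = (\<lambda>k l. if k \<in> {1..4} \<and> l \<in> {1..4} then fa_scal (g_low k l) a else 0)"
  by (intro ext) (auto simp: tt_lact_def gmet_def mult_const_r)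

lemma ginv_alt: "ginv X = (\<Sum>i\<in>{1..4}. \<Sum>j\<in>{1..4}. fa_scal (g_up i j) (X i j))"
  by (simp add: ginv_def mult_const_r)

lemma c1: "gmet \<in> tt_carrier"
  by (auto simp: tt_carrier_def gmet_def carrier_const)

lemma c2: "a \<in> fa_carrier \<Longrightarrow> tt_eq \<theta> (tt_lact a gmet) (tt_ract \<theta> gmet a)"
proof (rule tt_eqI)
  fix k l :: nat assume a: "a \<in> fa_carrier" and kl: "k \<in> {1..4}" "l \<in> {1..4}"
  have L: "tt_lact a gmet k l = fa_scal (g_low k l) a" using kl by (simp add: lact_gmet)
  have R: "tt_ract \<theta> gmet a k l = fa_const (g_low k l) \<star> sigma \<theta> k (sigma \<theta> l a)"
    using kl by (simp add: tt_ract_def gmet_def)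
  show "tt_lact a gmet k l = tt_ract \<theta> gmet a k l"
    unfolding L R
  proof (cases "g_low k l = 0")
    case True then show "fa_scal (g_low k l) a = fa_const (g_low k l) \<star> sigma \<theta> k (sigma \<theta> l a)"
      by (simp add: fa_const0)
  next
    case False then show "fa_scal (g_low k l) a = fa_const (g_low k l) \<star> sigma \<theta> k (sigma \<theta> l a)"
      using a by (simp add: mult_const_l sigma_sigma gl0)
  qed
qed


lemma c3: "bimod_map_A_tt \<theta> (\<lambda>a. tt_lact a gmet)"
proof -
  define G where "G = (\<lambda>a k l. if k \<in> {1..4} \<and> l \<in> {1..4} then fa_scal (g_low k l) a else (0::fa))"
  have E: "(\<lambda>a. tt_lact a gmet) = G" unfolding G_def by (simp add: lact_gmet)
  have G_in: "\<And>k l a. k \<in> {1..4} \<Longrightarrow> l \<in> {1..4} \<Longrightarrow> G a k l = fa_scal (g_low k l) a"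
    by (simp add: G_def)
  have p1: "\<forall>a\<in>fa_carrier. G a \<in> tt_carrier"
    by (auto simp: G_def tt_carrier_def carrier_scal)
  have p2: "\<forall>a\<in>fa_carrier. \<forall>b\<in>fa_carrier. A_eq \<theta> a b \<longrightarrow> tt_eq \<theta> (G a) (G b)"
    by (auto simp: tt_eq_def G_in A_eq_def scal_diff[symmetric] ideal_scal simp del: atLeastAtMost_iff)
  have p3: "\<forall>a\<in>fa_carrier. \<forall>b\<in>fa_carrier. tt_eq \<theta> (G (a + b)) (G a + G b)"
    by (auto intro!: tt_eqI simp: G_in scal_add simp del: atLeastAtMost_iff)
  have p4: "\<forall>c. \<forall>a\<in>fa_carrier. tt_eq \<theta> (G (fa_scal c a)) (\<lambda>k l. fa_scal c (G a k l))"
    by (auto intro!: tt_eqI simp: G_in scal_scal mult.commute simp del: atLeastAtMost_iff)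
  have p5: "\<forall>a\<in>fa_carrier. \<forall>b\<in>fa_carrier. tt_eq \<theta> (G (a \<star> b)) (tt_lact a (G b))"
    by (auto intro!: tt_eqI simp: G_in tt_lact_def mult_scal_r simp del: atLeastAtMost_iff)
  have p6: "\<forall>a\<in>fa_carrier. \<forall>b\<in>fa_carrier. tt_eq \<theta> (G (a \<star> b)) (tt_ract \<theta> (G a) b)"
  proof (intro ballI tt_eqI)
    fix a b :: fa and k l :: nat assume b: "b \<in> fa_carrier" and kl: "k \<in> {1..4}" "l \<in> {1..4}"
    show "G (a \<star> b) k l = tt_ract \<theta> (G a) b k l"
      unfolding tt_ract_def G_in[OF kl]
    proof (cases "g_low k l = 0")
      case True then show "fa_scal (g_low k l) (a \<star> b) = fa_scal (g_low k l) a \<star> sigma \<theta> k (sigma \<theta> l b)"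
        by simp
    next
      case False then show "fa_scal (g_low k l) (a \<star> b) = fa_scal (g_low k l) a \<star> sigma \<theta> k (sigma \<theta> l b)"
        using b by (simp add: mult_scal_l sigma_sigma gl0)
    qed
  qed
  show ?thesis unfolding E bimod_map_A_tt_def using p1 p2 p3 p4 p5 p6 by blast
qed

lemma c5: "bimod_map_tt_A \<theta> ginv"
proof -
  have p1: "\<forall>X\<in>tt_carrier. ginv X \<in> fa_carrier"
    by (auto simp: ginv_alt tt_carrier_def intro!: carrier_sum carrier_scal simp del: atLeastAtMost_iff)
  have p2: "\<forall>X\<in>tt_carrier. \<forall>Y\<in>tt_carrier. tt_eq \<theta> X Y \<longrightarrow> A_eq \<theta> (ginv X) (ginv Y)"
  proof (intro ballI impI)
    fix X Y assume "tt_eq \<theta> X Y"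
    then have "\<And>i j. i \<in> {1..4} \<Longrightarrow> j \<in> {1..4} \<Longrightarrow> X i j - Y i j \<in> fa_ideal \<theta>"
      by (simp add: tt_eq_def A_eq_def)
    then have "(\<Sum>i\<in>{1..4}. \<Sum>j\<in>{1..4}. fa_scal (g_up i j) (X i j - Y i j)) \<in> fa_ideal \<theta>"
      by (intro ideal_sum ideal_scal) auto
    then show "A_eq \<theta> (ginv X) (ginv Y)"
      by (simp add: A_eq_def ginv_alt sum_subtractf[symmetric] scal_diff)
  qed
  have p3: "\<forall>X\<in>tt_carrier. \<forall>Y\<in>tt_carrier. A_eq \<theta> (ginv (X + Y)) (ginv X + ginv Y)"
    by (auto intro!: A_eqI simp: ginv_alt scal_add sum.distrib)
  have p4: "\<forall>c. \<forall>X\<in>tt_carrier. A_eq \<theta> (ginv (\<lambda>k l. fa_scal c (X k l))) (fa_scal c (ginv X))"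
    by (auto intro!: A_eqI simp: ginv_alt scal_sum scal_scal mult.commute)
  have p5: "\<forall>a\<in>fa_carrier. \<forall>X\<in>tt_carrier. A_eq \<theta> (ginv (tt_lact a X)) (a \<star> ginv X)"
    by (auto intro!: A_eqI simp: ginv_alt tt_lact_def mult_sum_r mult_scal_r)
  have p6: "\<forall>a\<in>fa_carrier. \<forall>X\<in>tt_carrier. A_eq \<theta> (ginv (tt_ract \<theta> X a)) (ginv X \<star> a)"
  proof (intro ballI A_eqI)
    fix a X assume a: "a \<in> fa_carrier"
    have "\<And>i j. fa_scal (g_up i j) (X i j \<star> sigma \<theta> i (sigma \<theta> j a)) = fa_scal (g_up i j) (X i j) \<star> a"
    proof -
      fix i j show "fa_scal (g_up i j) (X i j \<star> sigma \<theta> i (sigma \<theta> j a)) = fa_scal (g_up i j) (X i j) \<star> a"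
        using a by (cases "g_up i j = 0") (simp_all add: mult_scal_l sigma_sigma gu0)
    qed
    then show "ginv (tt_ract \<theta> X a) = ginv X \<star> a"
      by (simp add: ginv_alt tt_ract_def mult_sum_l)
  qed
  show ?thesis unfolding bimod_map_tt_A_def using p1 p2 p3 p4 p5 p6 by blast
qed


lemma if_app: "(if c then f else g) x = (if c then f x else g x)" by simp

lemma gsup_eq: "gsup \<alpha> = (\<lambda>l. if l = fst \<alpha> then fa_const (g_low (fst \<alpha>) (snd \<alpha>)) else 0)"
  by (rule ext) (simp add: gsup_def om_lact_def dz_def mult_const_r scal_const)

lemma tens_g: "tens \<theta> (gsup \<alpha>) (gsub \<alpha>) = (\<lambda>k l. if (k,l) = \<alpha> then fa_const (g_low (fst \<alpha>) (snd \<alpha>)) else 0)"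
  by (intro ext, cases \<alpha>) (auto simp: tens_def gsup_eq gsub_def dz_def sigma_const mult_const_r scal_const)

lemma c4: "tt_eq \<theta> (\<Sum>\<alpha>\<in>{1..4}\<times>{1..4}. tens \<theta> (gsup \<alpha>) (gsub \<alpha>)) gmet"
proof (rule tt_eqI)
  fix k l :: nat assume kl: "k \<in> {1..4}" "l \<in> {1..4}"
  have "(\<Sum>\<alpha>\<in>{1..4}\<times>{1..4}. tens \<theta> (gsup \<alpha>) (gsub \<alpha>)) k l
     = (\<Sum>\<alpha>\<in>{1..4}\<times>{1..4}. if \<alpha> = (k,l) then fa_const (g_low k l) else 0)"
  proof -
    have "(\<Sum>\<alpha>\<in>{1..4}\<times>{1..4}. tens \<theta> (gsup \<alpha>) (gsub \<alpha>)) k l = (\<Sum>\<alpha>\<in>{1..4}\<times>{1..4}. tens \<theta> (gsup \<alpha>) (gsub \<alpha>) k l)"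
      by (simp only: sum_app)
    also have "\<dots> = (\<Sum>\<alpha>\<in>{1..4}\<times>{1..4}. if \<alpha> = (k,l) then fa_const (g_low k l) else 0)"
      by (rule sum.cong) (auto simp: tens_g)
    finally show ?thesis .
  qed
  also have "\<dots> = fa_const (g_low k l)" using kl by (simp add: sum.delta)
  finally show "(\<Sum>\<alpha>\<in>{1..4}\<times>{1..4}. tens \<theta> (gsup \<alpha>) (gsub \<alpha>)) k l = gmet k l"
    using kl by (simp add: gmet_def)
qed

lemma prod_sum: "(\<Sum>\<alpha>\<in>A\<times>B. F \<alpha>) = (\<Sum>i\<in>A. \<Sum>j\<in>B. F (i,j))"
  by (simp add: sum.cartesian_product)

lemma term6: "om_lact (ginv (tens \<theta> \<omega> (gsup \<alpha>))) (gsub \<alpha>) m w =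
  (if m = snd \<alpha> then (\<Sum>k\<in>{1..4}. \<Sum>l\<in>{1..4}. g_up k l * (if l = fst \<alpha> then g_low (fst \<alpha>) (snd \<alpha>) * \<omega> k w else 0)) else 0)"
proof -
  have T: "tens \<theta> \<omega> (gsup \<alpha>) = (\<lambda>k l. if l = fst \<alpha> then fa_scal (g_low (fst \<alpha>) (snd \<alpha>)) (\<omega> k) else 0)"
    by (intro ext) (simp add: tens_def gsup_eq sigma_const mult_const_r)
  show ?thesis
    unfolding T by (simp add: om_lact_def gsub_def dz_def mult_const_r ginv_alt sum_app scal_apply if_app cong: if_cong)
qed

lemma c6: "\<omega> \<in> om_carrier \<Longrightarrow>
   om_eq \<theta> (\<Sum>\<alpha>\<in>{1..4}\<times>{1..4}. om_lact (ginv (tens \<theta> \<omega> (gsup \<alpha>))) (gsub \<alpha>)) \<omega>"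
proof (rule om_eqI, rule ext)
  fix m w assume m: "m \<in> {1..4::nat}"
  have "(\<Sum>\<alpha>\<in>{1..4}\<times>{1..4}. om_lact (ginv (tens \<theta> \<omega> (gsup \<alpha>))) (gsub \<alpha>)) m w
    = (\<Sum>i\<in>{1..4}. \<Sum>j\<in>{1..4}. (if m = j then (\<Sum>k\<in>{1..4}. \<Sum>l\<in>{1..4}. g_up k l * (if l = i then g_low i j * \<omega> k w else 0)) else 0))"
    by (simp only: sum_app term6 prod_sum fst_conv snd_conv)
  also have "\<dots> = \<omega> m w"
    using m unfolding four by (auto simp: g_up_def g_low_def Pmat_def)
  finally show "(\<Sum>\<alpha>\<in>{1..4}\<times>{1..4}. om_lact (ginv (tens \<theta> \<omega> (gsup \<alpha>))) (gsub \<alpha>)) m w = \<omega> m w" .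
qed


lemma term7:
  assumes om: "\<omega> \<in> om_carrier"
  shows "om_ract \<theta> (gsup \<alpha>) (ginv (tens \<theta> (gsub \<alpha>) \<omega>)) m w =
  (if m = fst \<alpha> then g_low m (snd \<alpha>) * (\<Sum>k\<in>{1..4}. \<Sum>l\<in>{1..4}. g_up k l * (if k = snd \<alpha> then \<omega> l w else 0)) else 0)"
proof -
  obtain i j where a: "\<alpha> = (i,j)" by (cases \<alpha>)
  have T: "tens \<theta> (gsub \<alpha>) \<omega> = (\<lambda>k l. if k = j then sigma \<theta> j (\<omega> l) else 0)"
    by (intro ext) (simp add: a tens_def gsub_def dz_def mult_const_l)
  have R: "om_ract \<theta> (gsup \<alpha>) b m = (if m = i then fa_scal (g_low i j) (sigma \<theta> i b) else 0)" for b
    by (simp add: a om_ract_def gsup_eq mult_const_l)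
  show ?thesis
  proof (cases "m = i")
    case False then show ?thesis unfolding R by (simp add: a)
  next
    case True
    show ?thesis
    proof (cases "g_low i j = 0")
      case True with \<open>m = i\<close> show ?thesis unfolding R by (simp add: a)
    next
      case False
      have S: "sigma \<theta> i (ginv (tens \<theta> (gsub \<alpha>) \<omega>)) =
        (\<Sum>k\<in>{1..4}. \<Sum>l\<in>{1..4}. fa_scal (g_up k l) (if k = j then \<omega> l else 0))"
        unfolding ginv_alt T sigma_sum sigma_scal
      proof (intro sum.cong refl)
        fix k l :: nat assume l: "l \<in> {1..4}"
        then have "\<omega> l \<in> fa_carrier" using om by (simp add: om_carrier_def)
        then show "fa_scal (g_up k l) (sigma \<theta> i (if k = j then sigma \<theta> j (\<omega> l) else 0)) =
           fa_scal (g_up k l) (if k = j then \<omega> l else 0)"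
          using False by (simp add: sigma_sigma gl0)
      qed
      show ?thesis using \<open>m = i\<close> unfolding R S
        by (simp add: a sum_app scal_apply if_app cong: if_cong)
    qed
  qed
qed

lemma c7: "\<omega> \<in> om_carrier \<Longrightarrow>
   om_eq \<theta> (\<Sum>\<alpha>\<in>{1..4}\<times>{1..4}. om_ract \<theta> (gsup \<alpha>) (ginv (tens \<theta> (gsub \<alpha>) \<omega>))) \<omega>"
proof (rule om_eqI, rule ext)
  fix m w assume om: "\<omega> \<in> om_carrier" and m: "m \<in> {1..4::nat}"
  have "(\<Sum>\<alpha>\<in>{1..4}\<times>{1..4}. om_ract \<theta> (gsup \<alpha>) (ginv (tens \<theta> (gsub \<alpha>) \<omega>))) m w
    = (\<Sum>i\<in>{1..4}. \<Sum>j\<in>{1..4}. (if m = i then g_low m j * (\<Sum>k\<in>{1..4}. \<Sum>l\<in>{1..4}. g_up k l * (if k = j then \<omega> l w else 0)) else 0))"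
    by (simp only: sum_app term7[OF om] prod_sum fst_conv snd_conv)
  also have "\<dots> = \<omega> m w"
    using m unfolding four by (auto simp: g_up_def g_low_def Pmat_def)
  finally show "(\<Sum>\<alpha>\<in>{1..4}\<times>{1..4}. om_ract \<theta> (gsup \<alpha>) (ginv (tens \<theta> (gsub \<alpha>) \<omega>))) m w = \<omega> m w" .
qed

theorem lemma4p2:
  fixes \<theta> :: real
  shows "gmet \<in> tt_carrier
    \<and> (\<forall>a\<in>fa_carrier. tt_eq \<theta> (tt_lact a gmet) (tt_ract \<theta> gmet a))
    \<and> bimod_map_A_tt \<theta> (\<lambda>a. tt_lact a gmet)
    \<and> tt_eq \<theta> (\<Sum>\<alpha>\<in>{1..4}\<times>{1..4}. tens \<theta> (gsup \<alpha>) (gsub \<alpha>)) gmet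
    \<and> bimod_map_tt_A \<theta> ginv
    \<and> (\<forall>\<omega>\<in>om_carrier.
         om_eq \<theta> (\<Sum>\<alpha>\<in>{1..4}\<times>{1..4}. om_lact (ginv (tens \<theta> \<omega> (gsup \<alpha>))) (gsub \<alpha>)) \<omega>)
    \<and> (\<forall>\<omega>\<in>om_carrier.
         om_eq \<theta> (\<Sum>\<alpha>\<in>{1..4}\<times>{1..4}. om_ract \<theta> (gsup \<alpha>) (ginv (tens \<theta> (gsub \<alpha>) \<omega>))) \<omega>)"
  using c1 c2 c3 c4 c5 c6 c7 by blast

end
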